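(* Let $\beta\in (0,1)$. Then for every sufficiently large integer $n$ and every $t\in\mathbb{N}$ with $t\leq 0.1\log_2(n)$ the following holds. Suppose $G$ is a graph on $n$ vertices such that for every set $A\subseteq V(G)$ of $t$ vertices we are given a set $Y_A\subseteq N_G[A]$ with $|Y_A|\geq \beta n$. Then in the Waiter-Client game on $G$, Waiter has a strategy such that at the end of the game Client's graph $C$ satisfies $|N_C[A]\cap Y_A| \geq \frac{\beta n}{200^{t+1}}$ for every $A\subseteq V(G)$ with $|A|=t$.
   Context: For a graph $H$ and $A\subseteq V(H)$, $N_H[A]:=\left(\bigcap_{v\in A} N_H(v)\right)\setminus A$ is the set of common neighbors of $A$. The Waiter-Client game on $G$: in each round Waiter offers two unclaimed edges of $G$, Client keeps one (it joins Client's graph $C$ on vertex set $V(G)$) and the other goes to Waiter; if one unclaimed edge remains in the final round it goes to Waiter. *)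

theory Defs
  imports Main "HOL-Library.Log_Nat" Complex_Main
begin

definition simple_graph :: "'a set \<Rightarrow> 'a set set \<Rightarrow> bool" where
  "simple_graph V E \<longleftrightarrow> finite V \<and>
     (\<forall>e\<in>E. \<exists>u v. u \<noteq> v \<and> u \<in> V \<and> v \<in> V \<and> e = {u, v})"

definition nbhd :: "'a set \<Rightarrow> 'a set set \<Rightarrow> 'a \<Rightarrow> 'a set" where
  "nbhd V H v = {u \<in> V. {u, v} \<in> H}"

definition common_nbhd :: "'a set \<Rightarrow> 'a set set \<Rightarrow> 'a set \<Rightarrow> 'a set" where
  "common_nbhd V H A = {u \<in> V. \<forall>v\<in>A. u \<in> nbhd V H v} - A"

text \<open>Waiter-Client game: state = (unclaimed edges U, Client's edges C).
  While at least two edges are unclaimed Waiter offers two distinct ones and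
  Client keeps either; when at most one remains, it goes to Waiter and the game ends.\<close>
inductive waiter_wins :: "('a set set \<Rightarrow> bool) \<Rightarrow> 'a set set \<Rightarrow> 'a set set \<Rightarrow> bool"
  for P where
  final: "finite U \<Longrightarrow> card U \<le> 1 \<Longrightarrow> P C \<Longrightarrow> waiter_wins P U C"
| offer: "e1 \<in> U \<Longrightarrow> e2 \<in> U \<Longrightarrow> e1 \<noteq> e2 \<Longrightarrow>
          waiter_wins P (U - {e1, e2}) (insert e1 C) \<Longrightarrow>
          waiter_wins P (U - {e1, e2}) (insert e2 C) \<Longrightarrow>
          waiter_wins P U C"

end

theory Submission
  imports Defs "HOL-Real_Asymp.Real_Asymp"
begin

locale wcg =
  fixes V :: "nat set" and E :: "nat set set" and t :: nat and Y :: "nat set \<Rightarrow> nat set" and k :: real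
  assumes finV: "finite V"
  and YA: "\<And>A. A \<subseteq> V \<Longrightarrow> card A = t \<Longrightarrow> Y A \<subseteq> V \<and> Y A \<inter> A = {}"
begin

definition AA where "AA = {A. A \<subseteq> V \<and> card A = t}"
definition star :: "nat set \<Rightarrow> nat \<Rightarrow> nat set set" where "star A y = (\<lambda>a. {y,a}) ` A"
definition pp :: "nat set set \<Rightarrow> nat set set \<Rightarrow> nat set \<Rightarrow> nat \<Rightarrow> real" where
  "pp U C A y = (if star A y \<subseteq> U \<union> C then (1/2::real) ^ card (star A y \<inter> U) else 0)"
definition ff where "ff U C A y = 1 - pp U C A y / 2"
definition TT where "TT U C A = 2 powr (k+2) * (\<Prod>y\<in>Y A. ff U C A y)"
definition rho :: "real \<Rightarrow> real" where "rho p = (p/2)/(1-p/2)"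
definition gam where "gam U C A e = (\<Sum>y\<in>Y A. if star A y \<subseteq> U \<union> C \<and> e \<in> star A y then TT U C A * rho (pp U C A y) else 0)"
definition kap where "kap U C A e1 e2 = (\<Sum>y\<in>Y A. if star A y \<subseteq> U \<union> C \<and> e1 \<in> star A y \<and> e2 \<in> star A y then TT U C A * rho (pp U C A y) else 0)"
definition Phi where "Phi U C = (\<Sum>A\<in>AA. TT U C A)"
definition Gam where "Gam U C e = (\<Sum>A\<in>AA. gam U C A e)"
definition Kap where "Kap U C e1 e2 = (\<Sum>A\<in>AA. kap U C A e1 e2)"

lemma finAA: "finite AA"
  unfolding AA_def using finV by (auto intro: finite_subset[of _ "Pow V"])

lemma AA_D: "A \<in> AA \<Longrightarrow> Y A \<subseteq> V \<and> Y A \<inter> A = {}"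
  unfolding AA_def using YA by auto

lemma finY: "A \<in> AA \<Longrightarrow> finite (Y A)"
  using AA_D finV finite_subset by blast

lemma pp_nonneg: "0 \<le> pp U C A y" unfolding pp_def by auto
lemma pp_le1: "pp U C A y \<le> 1" unfolding pp_def by (auto simp: power_le_one)
lemma ff_ge: "1/2 \<le> ff U C A y" using pp_le1[of U C A y] unfolding ff_def by auto
lemma ff_le: "ff U C A y \<le> 1" using pp_nonneg[of U C A y] unfolding ff_def by auto
lemma ff_nonneg: "0 \<le> ff U C A y" using ff_ge[of U C A y] by linarith
lemma ff_pos: "0 < ff U C A y" using ff_ge[of U C A y] by linarith
lemma TT_nonneg: "0 \<le> TT U C A"
proof -
  have "0 \<le> (\<Prod>y\<in>Y A. ff U C A y)" using ff_nonneg by (intro prod_nonneg) auto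
  then show ?thesis unfolding TT_def by simp
qed
lemma rho_nonneg: "0 \<le> p \<Longrightarrow> p \<le> 1 \<Longrightarrow> 0 \<le> rho p" unfolding rho_def by auto
lemma rho_pp: "0 \<le> rho (pp U C A y)" using rho_nonneg pp_nonneg pp_le1 by blast
lemma ff_rho: "ff U C A y * (1 + rho (pp U C A y)) = 1"
  using pp_le1[of U C A y] unfolding ff_def rho_def by (auto simp: field_simps)
lemma ff_rho2: "ff U C A y * (1 - rho (pp U C A y)) = 1 - pp U C A y"
  using pp_le1[of U C A y] unfolding ff_def rho_def by (auto simp: field_simps)

lemma uniq: "A \<in> AA \<Longrightarrow> y \<in> Y A \<Longrightarrow> y' \<in> Y A \<Longrightarrow> e \<in> star A y \<Longrightarrow> e \<in> star A y' \<Longrightarrow> y = y'"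
  using AA_D[of A] unfolding star_def by (auto simp: doubleton_eq_iff)

lemma prod_one_change:
  assumes "finite S" "y0 \<in> S" "\<And>y. y \<in> S \<Longrightarrow> y \<noteq> y0 \<Longrightarrow> g' y = g y"
  shows "prod g' S = g' y0 * prod g (S - {y0})"
proof -
  have "prod g' S = g' y0 * prod g' (S - {y0})" using assms by (simp add: prod.remove)
  also have "prod g' (S - {y0}) = prod g (S - {y0})" using assms by (intro prod.cong) auto
  finally show ?thesis .
qed

lemma sum_one_nz:
  assumes "finite S" "y0 \<in> S" "\<And>y. y \<in> S \<Longrightarrow> y \<noteq> y0 \<Longrightarrow> g y = 0"
  shows "sum g S = g y0"
proof -
  have "sum g S = g y0 + sum g (S - {y0})" using assms by (simp add: sum.remove)
  also have "sum g (S - {y0}) = 0" using assms by (intro sum.neutral) auto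
  finally show ?thesis by simp
qed

lemma pp_noe:
  assumes "e \<notin> star A y" "e \<in> U"
  shows "pp (U - {e}) C A y = pp U C A y" "pp (U - {e}) (insert e C) A y = pp U C A y"
proof -
  have 1: "star A y \<inter> (U - {e}) = star A y \<inter> U" using assms by auto
  have 2: "star A y \<subseteq> U - {e} \<union> C \<longleftrightarrow> star A y \<subseteq> U \<union> C" using assms by auto
  have 3: "star A y \<subseteq> U - {e} \<union> insert e C \<longleftrightarrow> star A y \<subseteq> U \<union> C" using assms by auto
  show "pp (U - {e}) C A y = pp U C A y" "pp (U - {e}) (insert e C) A y = pp U C A y"
    unfolding pp_def using 1 2 3 by auto
qed

lemma W_update:
  assumes A: "A \<in> AA" and eU: "e \<in> U" and eC: "e \<notin> C"
  shows "TT (U - {e}) C A = TT U C A + gam U C A e"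
proof (cases "\<exists>y0\<in>Y A. e \<in> star A y0")
  case False
  then have "\<And>y. y \<in> Y A \<Longrightarrow> pp (U - {e}) C A y = pp U C A y" using pp_noe eU by blast
  then have "TT (U - {e}) C A = TT U C A" unfolding TT_def ff_def by (auto intro!: prod.cong)
  moreover have "gam U C A e = 0" unfolding gam_def using False by (auto intro!: sum.neutral)
  ultimately show ?thesis by simp
next
  case True
  then obtain y0 where y0: "y0 \<in> Y A" "e \<in> star A y0" by blast
  have oth: "\<And>y. y \<in> Y A \<Longrightarrow> y \<noteq> y0 \<Longrightarrow> e \<notin> star A y" using uniq[OF A] y0 by blast
  have pe: "\<And>y. y \<in> Y A \<Longrightarrow> y \<noteq> y0 \<Longrightarrow> pp (U - {e}) C A y = pp U C A y" using pp_noe eU oth by blast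
  have T1: "TT (U - {e}) C A = 2 powr (k+2) * (ff (U - {e}) C A y0 * (\<Prod>y\<in>Y A - {y0}. ff U C A y))"
    unfolding TT_def using pe by (subst prod_one_change[OF finY[OF A] y0(1)]) (auto simp: ff_def)
  have T0: "TT U C A = 2 powr (k+2) * (ff U C A y0 * (\<Prod>y\<in>Y A - {y0}. ff U C A y))"
    unfolding TT_def by (subst prod_one_change[OF finY[OF A] y0(1)]) auto
  have g: "gam U C A e = (if star A y0 \<subseteq> U \<union> C then TT U C A * rho (pp U C A y0) else 0)"
    unfolding gam_def using oth by (subst sum_one_nz[OF finY[OF A] y0(1)]) (auto simp: y0)
  have p1: "pp (U - {e}) C A y0 = 0" unfolding pp_def using y0 eC by auto
  show ?thesis
  proof (cases "star A y0 \<subseteq> U \<union> C")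
    case True
    have "ff (U - {e}) C A y0 = ff U C A y0 * (1 + rho (pp U C A y0))"
      using p1 ff_rho unfolding ff_def by simp
    then show ?thesis using T1 T0 g True by (simp add: algebra_simps)
  next
    case False
    then have "pp U C A y0 = 0" unfolding pp_def by auto
    then show ?thesis using T1 T0 g False p1 by (simp add: ff_def)
  qed
qed

lemma C_update:
  assumes A: "A \<in> AA" and eU: "e \<in> U" and eC: "e \<notin> C" and fU: "finite U"
  shows "TT (U - {e}) (insert e C) A = TT U C A - gam U C A e"
proof (cases "\<exists>y0\<in>Y A. e \<in> star A y0")
  case False
  then have "\<And>y. y \<in> Y A \<Longrightarrow> pp (U - {e}) (insert e C) A y = pp U C A y" using pp_noe eU by blast
  then have "TT (U - {e}) (insert e C) A = TT U C A" unfolding TT_def ff_def by (auto intro!: prod.cong)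
  moreover have "gam U C A e = 0" unfolding gam_def using False by (auto intro!: sum.neutral)
  ultimately show ?thesis by simp
next
  case True
  then obtain y0 where y0: "y0 \<in> Y A" "e \<in> star A y0" by blast
  have oth: "\<And>y. y \<in> Y A \<Longrightarrow> y \<noteq> y0 \<Longrightarrow> e \<notin> star A y" using uniq[OF A] y0 by blast
  have pe: "\<And>y. y \<in> Y A \<Longrightarrow> y \<noteq> y0 \<Longrightarrow> pp (U - {e}) (insert e C) A y = pp U C A y" using pp_noe eU oth by blast
  have T1: "TT (U - {e}) (insert e C) A = 2 powr (k+2) * (ff (U - {e}) (insert e C) A y0 * (\<Prod>y\<in>Y A - {y0}. ff U C A y))"
    unfolding TT_def using pe by (subst prod_one_change[OF finY[OF A] y0(1)]) (auto simp: ff_def)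
  have T0: "TT U C A = 2 powr (k+2) * (ff U C A y0 * (\<Prod>y\<in>Y A - {y0}. ff U C A y))"
    unfolding TT_def by (subst prod_one_change[OF finY[OF A] y0(1)]) auto
  have g: "gam U C A e = (if star A y0 \<subseteq> U \<union> C then TT U C A * rho (pp U C A y0) else 0)"
    unfolding gam_def using oth by (subst sum_one_nz[OF finY[OF A] y0(1)]) (auto simp: y0)
  have UC: "U - {e} \<union> insert e C = U \<union> C" using eU by auto
  show ?thesis
  proof (cases "star A y0 \<subseteq> U \<union> C")
    case True
    have "star A y0 \<inter> (U - {e}) = (star A y0 \<inter> U) - {e}" by auto
    moreover have "e \<in> star A y0 \<inter> U" using y0 eU by auto
    moreover have fin: "finite (star A y0 \<inter> U)" using fU by auto
    ultimately have c: "card (star A y0 \<inter> (U - {e})) = card (star A y0 \<inter> U) - 1" "card (star A y0 \<inter> U) \<ge> 1"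
      by (auto simp: card_Diff_singleton Suc_le_eq card_gt_0_iff)
    have pw: "(1/2::real) ^ (m - 1) = 2 * (1/2)^m" if "m \<ge> 1" for m :: nat
      using that by (cases m) auto
    have "pp (U - {e}) (insert e C) A y0 = 2 * pp U C A y0"
      unfolding pp_def using True UC c pw by auto
    then have F: "ff (U - {e}) (insert e C) A y0 = ff U C A y0 * (1 - rho (pp U C A y0))"
      using ff_rho2 unfolding ff_def by simp
    define R where "R = 2 powr (k+2) * (\<Prod>y\<in>Y A - {y0}. ff U C A y)"
    have "TT (U - {e}) (insert e C) A = R * (ff U C A y0 * (1 - rho (pp U C A y0)))"
      using T1 F unfolding R_def by simp
    moreover have "TT U C A = R * ff U C A y0" using T0 unfolding R_def by simp
    ultimately show ?thesis using g True by (simp add: algebra_simps)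
  next
    case False
    then have "pp U C A y0 = 0" "pp (U - {e}) (insert e C) A y0 = 0" unfolding pp_def using UC by auto
    then show ?thesis using T1 T0 g False by (simp add: ff_def)
  qed
qed

lemma gam_nonneg: "0 \<le> gam U C A e"
  unfolding gam_def using TT_nonneg rho_pp by (auto intro!: sum_nonneg)

lemma kap_nonneg: "0 \<le> kap U C A e1 e2"
  unfolding kap_def using TT_nonneg rho_pp by (auto intro!: sum_nonneg)

lemma kap_le_gam: "kap U C A e1 e2 \<le> gam U C A e1"
  unfolding kap_def gam_def using TT_nonneg rho_pp by (auto intro!: sum_mono)

lemma gam_mono:
  assumes A: "A \<in> AA" and e2U: "e2 \<in> U" and e2C: "e2 \<notin> C"
  shows "gam U C A e1 - kap U C A e1 e2 \<le> gam (U - {e2}) C A e1"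
proof -
  have TW: "TT U C A \<le> TT (U - {e2}) C A" using W_update[OF A e2U e2C] gam_nonneg by simp
  have "gam U C A e1 - kap U C A e1 e2 = (\<Sum>y\<in>Y A. (if star A y \<subseteq> U \<union> C \<and> e1 \<in> star A y then TT U C A * rho (pp U C A y) else 0) - (if star A y \<subseteq> U \<union> C \<and> e1 \<in> star A y \<and> e2 \<in> star A y then TT U C A * rho (pp U C A y) else 0))"
    unfolding gam_def kap_def by (simp add: sum_subtractf)
  also have "\<dots> \<le> gam (U - {e2}) C A e1"
    unfolding gam_def
  proof (rule sum_mono)
    fix y assume y: "y \<in> Y A"
    show "(if star A y \<subseteq> U \<union> C \<and> e1 \<in> star A y then TT U C A * rho (pp U C A y) else 0) - (if star A y \<subseteq> U \<union> C \<and> e1 \<in> star A y \<and> e2 \<in> star A y then TT U C A * rho (pp U C A y) else 0)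
       \<le> (if star A y \<subseteq> U - {e2} \<union> C \<and> e1 \<in> star A y then TT (U - {e2}) C A * rho (pp (U - {e2}) C A y) else 0)"
    proof (cases "e2 \<in> star A y")
      case True
      then show ?thesis using TT_nonneg rho_pp[of "U - {e2}" C A y] by (auto intro: mult_nonneg_nonneg)
    next
      case False
      then have "pp (U - {e2}) C A y = pp U C A y" using pp_noe e2U by blast
      moreover have "star A y \<subseteq> U - {e2} \<union> C \<longleftrightarrow> star A y \<subseteq> U \<union> C" using False by auto
      ultimately show ?thesis using False TW rho_pp[of U C A y] by (auto intro: mult_right_mono)
    qed
  qed
  finally show ?thesis .
qed

lemma TT_step:
  assumes A: "A \<in> AA" and U: "e1 \<in> U" "e2 \<in> U" "e1 \<noteq> e2" and C: "e1 \<notin> C" "e2 \<notin> C" and fU: "finite U"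
  shows "TT (U - {e1,e2}) (insert e1 C) A \<le> TT U C A + gam U C A e2 - gam U C A e1 + kap U C A e1 e2"
proof -
  have eq: "U - {e1,e2} = (U - {e2}) - {e1}" by auto
  have "TT (U - {e1,e2}) (insert e1 C) A = TT (U - {e2}) C A - gam (U - {e2}) C A e1"
    unfolding eq using U C fU by (intro C_update[OF A]) auto
  also have "\<dots> = TT U C A + gam U C A e2 - gam (U - {e2}) C A e1"
    using W_update[OF A U(2) C(2)] by simp
  finally show ?thesis using gam_mono[OF A U(2) C(2), of e1] by simp
qed

lemma Phi_step:
  assumes U: "e1 \<in> U" "e2 \<in> U" "e1 \<noteq> e2" and C: "e1 \<notin> C" "e2 \<notin> C" and fU: "finite U"
  shows "Phi (U - {e1,e2}) (insert e1 C) \<le> Phi U C + Gam U C e2 - Gam U C e1 + Kap U C e1 e2"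
proof -
  have "Phi (U - {e1,e2}) (insert e1 C) \<le> (\<Sum>A\<in>AA. TT U C A + gam U C A e2 - gam U C A e1 + kap U C A e1 e2)"
    unfolding Phi_def using TT_step[OF _ U C fU] by (intro sum_mono) auto
  then show ?thesis unfolding Phi_def Gam_def Kap_def by (simp add: sum.distrib sum_subtractf)
qed

end


lemma nn1_le_pow: "n * (n - 1) \<le> (2::nat)^n"
proof (induction n)
  case 0 then show ?case by simp
next
  case (Suc n)
  show ?case
  proof (cases "n \<le> 2")
    case True
    then have "n = 0 \<or> n = 1 \<or> n = 2" by auto
    then show ?thesis by auto
  next
    case False
    define m where "m = n - 3"
    have m: "n = m + 3" using False unfolding m_def by simp
    have "Suc n * (Suc n - 1) \<le> 2 * (n * (n - 1))" unfolding m by (simp add: algebra_simps)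
    also have "\<dots> \<le> 2 * 2^n" using Suc by simp
    finally show ?thesis by simp
  qed
qed

context wcg begin

lemma rho_pow_bound: "rho ((1/2::real)^u) * (real u * (real u - 1)) \<le> 1"
proof -
  define p :: real where "p = (1/2)^u"
  have p0: "0 \<le> p" "p \<le> 1" unfolding p_def by (auto simp: power_le_one)
  have r: "rho p \<le> p" unfolding rho_def using p0 by (auto simp: field_simps mult_le_cancel_left1 intro: mult_left_le_one_le)
  have "real u * (real u - 1) \<le> 2^u"
  proof (cases u)
    case 0 then show ?thesis by simp
  next
    case (Suc m)
    have "real (u * (u - 1)) \<le> real (2^u)" using nn1_le_pow[of u] by linarith
    then show ?thesis using Suc by (simp add: of_nat_diff algebra_simps)
  qed
  have nn: "0 \<le> real u * (real u - 1)" by (cases u) auto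
  have "rho p * (real u * (real u - 1)) \<le> p * 2^u"
    using r nn \<open>real u * (real u - 1) \<le> 2^u\<close> p0 rho_nonneg[OF p0]
    by (meson mult_mono order.trans zero_le_power zero_le_numeral order_refl)
  also have "p * 2^u = 1" unfolding p_def by (simp add: power_one_over field_simps)
  finally show ?thesis unfolding p_def .
qed


lemma pp_half: "finite U \<Longrightarrow> e \<in> U \<Longrightarrow> e \<in> star A y \<Longrightarrow> pp U C A y \<le> 1/2"
proof -
  assume a: "finite U" "e \<in> U" "e \<in> star A y"
  then have "card (star A y \<inter> U) \<ge> 1" by (auto simp: Suc_le_eq card_gt_0_iff)
  then have "(1/2::real) ^ card (star A y \<inter> U) \<le> (1/2)^1" by (intro power_decreasing) auto
  then show ?thesis unfolding pp_def by auto
qed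

lemma rho_third: "0 \<le> p \<Longrightarrow> p \<le> 1/2 \<Longrightarrow> rho p \<le> 1/3"
  unfolding rho_def by (auto simp: field_simps)

lemma gam_le: assumes A: "A \<in> AA" and "finite U" "e \<in> U"
  shows "gam U C A e \<le> TT U C A / 3"
proof (cases "\<exists>y0\<in>Y A. e \<in> star A y0")
  case False
  then have "gam U C A e = 0" unfolding gam_def by (auto intro!: sum.neutral)
  then show ?thesis using TT_nonneg[of U C A] by simp
next
  case True
  then obtain y0 where y0: "y0 \<in> Y A" "e \<in> star A y0" by blast
  have oth: "\<And>y. y \<in> Y A \<Longrightarrow> y \<noteq> y0 \<Longrightarrow> e \<notin> star A y" using uniq[OF A] y0 by blast
  have g: "gam U C A e = (if star A y0 \<subseteq> U \<union> C then TT U C A * rho (pp U C A y0) else 0)"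
    unfolding gam_def using oth by (subst sum_one_nz[OF finY[OF A] y0(1)]) (auto simp: y0)
  have "rho (pp U C A y0) \<le> 1/3" using pp_half[OF assms(2,3) y0(2)] pp_nonneg by (intro rho_third) auto
  then have "TT U C A * rho (pp U C A y0) \<le> TT U C A * (1/3)" using TT_nonneg by (intro mult_left_mono) auto
  then show ?thesis using g TT_nonneg[of U C A] by auto
qed

lemma Gam_nonneg: "0 \<le> Gam U C e" unfolding Gam_def using gam_nonneg by (auto intro: sum_nonneg)
lemma Kap_nonneg: "0 \<le> Kap U C e1 e2" unfolding Kap_def using kap_nonneg by (auto intro: sum_nonneg)
lemma Kap_le_Gam: "Kap U C e1 e2 \<le> Gam U C e1" unfolding Kap_def Gam_def using kap_le_gam by (auto intro: sum_mono)
lemma Gam_le: "finite U \<Longrightarrow> e \<in> U \<Longrightarrow> Gam U C e \<le> Phi U C / 3"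
  unfolding Gam_def Phi_def using gam_le by (auto intro: sum_mono simp: sum_divide_distrib)

lemma pair_sum_y:
  assumes fU: "finite U"
  shows "(\<Sum>e1\<in>U. \<Sum>e2\<in>U - {e1}. (if star A y \<subseteq> U \<union> C \<and> e1 \<in> star A y \<and> e2 \<in> star A y then TT U C A * rho (pp U C A y) else 0)) \<le> TT U C A"
proof (cases "star A y \<subseteq> U \<union> C")
  case False then show ?thesis using TT_nonneg by simp
next
  case True
  define c where "c = TT U C A * rho (pp U C A y)"
  define S where "S = star A y \<inter> U"
  define u where "u = card S"
  have fS: "finite S" unfolding S_def using fU by auto
  have inner: "(\<Sum>e2\<in>U - {e1}. (if e1 \<in> star A y \<and> e2 \<in> star A y then c else 0)) = (if e1 \<in> S then c * (real u - 1) else 0)" if "e1 \<in> U" for e1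
  proof (cases "e1 \<in> star A y")
    case False then show ?thesis unfolding S_def by simp
  next
    case True
    have "(\<Sum>e2\<in>U - {e1}. (if e1 \<in> star A y \<and> e2 \<in> star A y then c else 0)) = (\<Sum>e2\<in>U - {e1}. (if e2 \<in> star A y then c else 0))"
      using True by simp
    also have "\<dots> = c * real (card ((U - {e1}) \<inter> star A y))" by (simp add: sum.inter_restrict[symmetric] fU)
    also have "(U - {e1}) \<inter> star A y = S - {e1}" unfolding S_def by auto
    also have "card (S - {e1}) = u - 1" unfolding u_def using True that fS by (simp add: S_def)
    also have "real (u - 1) = real u - 1" using True that fS unfolding u_def S_def
      by (subst of_nat_diff) (auto simp: Suc_le_eq card_gt_0_iff)
    finally show ?thesis using True that unfolding S_def by simp
  qed
  have "(\<Sum>e1\<in>U. \<Sum>e2\<in>U - {e1}. (if star A y \<subseteq> U \<union> C \<and> e1 \<in> star A y \<and> e2 \<in> star A y then TT U C A * rho (pp U C A y) else 0))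
     = (\<Sum>e1\<in>U. (if e1 \<in> S then c * (real u - 1) else 0))"
    using True inner unfolding c_def[symmetric] by (intro sum.cong) auto
  also have "\<dots> = real u * (c * (real u - 1))"
  proof -
    have "U \<inter> S = S" unfolding S_def by auto
    then show ?thesis by (simp add: sum.inter_restrict[symmetric] fU u_def)
  qed
  also have "\<dots> = TT U C A * (rho (pp U C A y) * (real u * (real u - 1)))" unfolding c_def by (simp add: algebra_simps)
  also have "\<dots> \<le> TT U C A * 1"
    using rho_pow_bound[of u] True TT_nonneg unfolding pp_def u_def S_def by (intro mult_left_mono) auto
  finally show ?thesis by simp
qed

lemma pair_sum:
  assumes fU: "finite U"
  shows "(\<Sum>e1\<in>U. \<Sum>e2\<in>U - {e1}. Kap U C e1 e2) \<le> real (card V) * Phi U C"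
proof -
  have perA: "(\<Sum>e1\<in>U. \<Sum>e2\<in>U - {e1}. kap U C A e1 e2) \<le> real (card V) * TT U C A" if A: "A \<in> AA" for A
  proof -
    have "(\<Sum>e1\<in>U. \<Sum>e2\<in>U - {e1}. kap U C A e1 e2) = (\<Sum>y\<in>Y A. \<Sum>e1\<in>U. \<Sum>e2\<in>U - {e1}. (if star A y \<subseteq> U \<union> C \<and> e1 \<in> star A y \<and> e2 \<in> star A y then TT U C A * rho (pp U C A y) else 0))"
      unfolding kap_def by (subst sum.swap) (simp add: sum.swap[of _ "Y A"])
    also have "\<dots> \<le> (\<Sum>y\<in>Y A. TT U C A)" using pair_sum_y[OF fU] by (intro sum_mono) auto
    also have "\<dots> = real (card (Y A)) * TT U C A" by simp
    also have "\<dots> \<le> real (card V) * TT U C A"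
      using AA_D[OF A] finV TT_nonneg by (intro mult_right_mono) (auto intro: card_mono)
    finally show ?thesis .
  qed
  have "(\<Sum>e1\<in>U. \<Sum>e2\<in>U - {e1}. Kap U C e1 e2) = (\<Sum>A\<in>AA. \<Sum>e1\<in>U. \<Sum>e2\<in>U - {e1}. kap U C A e1 e2)"
    unfolding Kap_def by (subst sum.swap) (simp add: sum.swap[of _ AA])
  also have "\<dots> \<le> (\<Sum>A\<in>AA. real (card V) * TT U C A)" using perA by (intro sum_mono) auto
  also have "\<dots> = real (card V) * Phi U C" unfolding Phi_def by (simp add: sum_distrib_left)
  finally show ?thesis .
qed

end


lemma cs_count:
  fixes n :: "nat \<Rightarrow> real"
  assumes "N \<ge> 1"
  shows "(\<Sum>j<N. n j)^2 \<le> real N * (\<Sum>j<N. (n j)^2)"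
proof -
  define m where "m = (\<Sum>j<N. n j) / real N"
  have "0 \<le> (\<Sum>j<N. (n j - m)^2)" by (intro sum_nonneg) auto
  also have "\<dots> = (\<Sum>j<N. (n j)^2) - 2 * m * (\<Sum>j<N. n j) + real N * m^2"
    by (simp add: power2_diff sum.distrib sum_subtractf sum_distrib_left mult.commute mult.left_commute)
  also have "\<dots> = (\<Sum>j<N. (n j)^2) - (\<Sum>j<N. n j)^2 / real N"
    using assms unfolding m_def by (simp add: power2_eq_square field_simps)
  finally show ?thesis using assms by (simp add: field_simps)
qed

lemma pigeon:
  fixes g :: "'a \<Rightarrow> real" and K :: "'a \<Rightarrow> 'a \<Rightarrow> real"
  assumes fU: "finite U" and M: "card U = M" and N1: "1 \<le> N" and NM: "N < M"
    and g: "\<And>e. e \<in> U \<Longrightarrow> 0 \<le> g e \<and> g e \<le> G"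
    and K0: "\<And>e1 e2. 0 \<le> K e1 e2"
    and Q: "(\<Sum>e1\<in>U. \<Sum>e2\<in>U - {e1}. K e1 e2) \<le> Q"
  shows "\<exists>e1\<in>U. \<exists>e2\<in>U. e1 \<noteq> e2 \<and> \<bar>g e1 - g e2\<bar> \<le> G / N \<and> K e1 e2 * (real M * real M - real N * real M) \<le> Q * N"
proof -
  define b where "b e = min (N - 1) (nat \<lfloor>g e * N / G\<rfloor>)" for e
  have bN: "b e < N" for e unfolding b_def using N1 by auto
  have close: "\<bar>g e1 - g e2\<bar> \<le> G / N" if "e1 \<in> U" "e2 \<in> U" "b e1 = b e2" for e1 e2
  proof (cases "G = 0")
    case True
    then have "g e1 = 0" "g e2 = 0" using g that(1,2) by (meson order.antisym)+
    then show ?thesis using True by simp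
  next
    case False
    then have Gp: "G > 0" using g that by force
    have xin: "real (b e) \<le> g e * N / G \<and> g e * N / G \<le> real (b e) + 1" if "e \<in> U" for e
    proof -
      define x where "x = g e * N / G"
      have "g e * N \<le> G * N" using g[OF that] by (intro mult_right_mono) auto
      then have x0: "0 \<le> x" "x \<le> N" unfolding x_def using g[OF that] Gp by (auto simp: field_simps)
      show ?thesis
      proof (cases "nat \<lfloor>x\<rfloor> \<le> N - 1")
        case True
        then have "b e = nat \<lfloor>x\<rfloor>" unfolding b_def x_def by auto
        moreover have "real_of_int \<lfloor>x\<rfloor> \<le> x" "x < real_of_int \<lfloor>x\<rfloor> + 1" by linarith+
        moreover have "real (nat \<lfloor>x\<rfloor>) = real_of_int \<lfloor>x\<rfloor>" using x0 by simp
        ultimately show ?thesis unfolding x_def[symmetric] by linarith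
      next
        case False
        then have "b e = N - 1" unfolding b_def x_def by auto
        moreover have "real (N - 1) \<le> x" using False x0 by linarith
        ultimately show ?thesis using x0 N1 unfolding x_def[symmetric] by (simp add: of_nat_diff)
      qed
    qed
    have "\<bar>g e1 * N / G - g e2 * N / G\<bar> \<le> 1" using xin[OF that(1)] xin[OF that(2)] that(3) by auto
    moreover have "g e1 * N / G - g e2 * N / G = (g e1 - g e2) * (N / G)" by (simp add: diff_divide_distrib left_diff_distrib)
    moreover have "\<bar>(g e1 - g e2) * (N / G)\<bar> = \<bar>g e1 - g e2\<bar> * (N / G)" using Gp by (simp add: abs_mult)
    ultimately have "\<bar>g e1 - g e2\<bar> * N / G \<le> 1" by simp
    then show ?thesis using Gp N1 by (simp add: field_simps)
  qed
  define P where "P = {p \<in> U \<times> U. fst p \<noteq> snd p \<and> b (fst p) = b (snd p)}"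
  have fP: "finite P" unfolding P_def using fU by auto
  define cnt where "cnt j = real (card {e \<in> U. b e = j})" for j
  have cardP: "real (card P) = (\<Sum>e1\<in>U. cnt (b e1) - 1)"
  proof -
    have "P = (SIGMA e1:U. {e2 \<in> U. b e2 = b e1} - {e1})" unfolding P_def by auto
    then have "card P = (\<Sum>e1\<in>U. card ({e2 \<in> U. b e2 = b e1} - {e1}))" using fU by (simp add: card_SigmaI)
    moreover have "real (card ({e2 \<in> U. b e2 = b e1} - {e1})) = cnt (b e1) - 1" if "e1 \<in> U" for e1
    proof -
      have "e1 \<in> {e2 \<in> U. b e2 = b e1}" using that by simp
      moreover have fin: "finite {e2 \<in> U. b e2 = b e1}" using fU by simp
      ultimately have c1: "card {e2 \<in> U. b e2 = b e1} \<ge> 1" by (metis One_nat_def Suc_leI card_gt_0_iff empty_iff)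
      have "card ({e2 \<in> U. b e2 = b e1} - {e1}) = card {e2 \<in> U. b e2 = b e1} - 1"
        using that fin by (simp add: card_Diff_singleton)
      then show ?thesis unfolding cnt_def using c1 by (simp add: of_nat_diff)
    qed
    ultimately show ?thesis by simp
  qed
  have grp: "(\<Sum>e1\<in>U. cnt (b e1)) = (\<Sum>j<N. (cnt j)^2)"
  proof -
    have "(\<Sum>e1\<in>U. cnt (b e1)) = (\<Sum>j<N. \<Sum>e1\<in>{x. x \<in> U \<and> b x = j}. cnt (b e1))"
      using fU bN by (intro sum.group[symmetric]) auto
    also have "\<dots> = (\<Sum>j<N. (cnt j)^2)"
      by (intro sum.cong) (auto simp: cnt_def power2_eq_square)
    finally show ?thesis .
  qed
  have sumcnt: "(\<Sum>j<N. cnt j) = real M"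
  proof -
    have "(\<Sum>j<N. cnt j) = real (\<Sum>j<N. card {x. x \<in> U \<and> b x = j})" unfolding cnt_def by simp
    also have "(\<Sum>j<N. card {x. x \<in> U \<and> b x = j}) = (\<Sum>j<N. \<Sum>x\<in>{x. x \<in> U \<and> b x = j}. 1)" by simp
    also have "\<dots> = (\<Sum>x\<in>U. 1)" using fU bN by (intro sum.group) auto
    finally show ?thesis using M by simp
  qed
  have cs: "real M * real M \<le> real N * (\<Sum>j<N. (cnt j)^2)"
    using cs_count[OF N1, of cnt] sumcnt by (simp add: power2_eq_square)
  have PN: "real M * real M - real N * real M \<le> real (card P) * real N"
  proof -
    have e: "real M + real (card P) = (\<Sum>j<N. (cnt j)^2)" using cardP grp M by (simp add: sum_subtractf algebra_simps)
    have "real N * (\<Sum>j<N. (cnt j)^2) = real N * real M + real N * real (card P)" unfolding e[symmetric] by (simp add: algebra_simps)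
    then show ?thesis using cs by (simp add: algebra_simps)
  qed
  have D0: "0 < real M * real M - real N * real M" using NM by (simp add: mult_strict_right_mono)
  have Q0: "0 \<le> Q" using Q K0 by (meson order.trans sum_nonneg)
  have sub: "sum (\<lambda>p. K (fst p) (snd p)) P \<le> Q"
  proof -
    have "sum (\<lambda>p. K (fst p) (snd p)) P \<le> sum (\<lambda>p. K (fst p) (snd p)) (SIGMA e1:U. U - {e1})"
      using fU K0 unfolding P_def by (intro sum_mono2) auto
    also have "\<dots> = (\<Sum>e1\<in>U. \<Sum>e2\<in>U - {e1}. K e1 e2)" using fU by (simp add: sum.Sigma split_beta)
    finally show ?thesis using Q by simp
  qed
  have "\<exists>p\<in>P. K (fst p) (snd p) * (real M * real M - real N * real M) \<le> Q * N"
  proof (rule ccontr)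
    assume "\<not> ?thesis"
    then have lt: "\<forall>p\<in>P. Q * N / (real M * real M - real N * real M) < K (fst p) (snd p)"
      using D0 by (auto simp: field_simps)
    have Pne: "P \<noteq> {}" using PN D0 by auto
    have "(\<Sum>p\<in>P. Q * N / (real M * real M - real N * real M)) < sum (\<lambda>p. K (fst p) (snd p)) P"
      using lt Pne fP by (intro sum_strict_mono) auto
    then have "real (card P) * (Q * N / (real M * real M - real N * real M)) < Q" using sub by simp
    moreover have "Q \<le> real (card P) * (Q * N / (real M * real M - real N * real M))"
    proof -
      have "Q * (real M * real M - real N * real M) \<le> Q * (real (card P) * real N)"
        using PN Q0 by (intro mult_left_mono) auto
      then show ?thesis using D0 by (simp add: field_simps)
    qed
    ultimately show False by simp
  qed
  then obtain p where p: "p \<in> P" "K (fst p) (snd p) * (real M * real M - real N * real M) \<le> Q * N" by blast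
  then show ?thesis unfolding P_def using close
    by (intro bexI[of _ "fst p"] bexI[of _ "snd p"]) (auto simp: P_def)
qed



context wcg begin

definition ss :: nat where "ss = nat \<lceil>sqrt (real (card V))\<rceil> + 2"
definition cc :: real where "cc = real ss + real (card V) / (real ss - 1)"
definition dl :: "nat \<Rightarrow> real" where "dl M = (if M < 2 * ss then 1 else cc / real M)"

lemma ss2: "2 \<le> ss" unfolding ss_def by simp

lemma Phi_nonneg: "0 \<le> Phi U C" unfolding Phi_def using TT_nonneg by (auto intro: sum_nonneg)

lemma kap_sym: "kap U C A e1 e2 = kap U C A e2 e1" unfolding kap_def by (intro sum.cong) auto
lemma Kap_sym: "Kap U C e1 e2 = Kap U C e2 e1" unfolding Kap_def using kap_sym by simp

lemma step_bound:
  assumes fU: "finite U" and U: "e1 \<in> U" "e2 \<in> U" "e1 \<noteq> e2" and UC: "U \<inter> C = {}"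
    and B: "\<bar>Gam U C e1 - Gam U C e2\<bar> + Kap U C e1 e2 \<le> B"
  shows "Phi (U - {e1,e2}) (insert e1 C) \<le> Phi U C + B" "Phi (U - {e1,e2}) (insert e2 C) \<le> Phi U C + B"
proof -
  have C: "e1 \<notin> C" "e2 \<notin> C" using U UC by auto
  show "Phi (U - {e1,e2}) (insert e1 C) \<le> Phi U C + B"
    using Phi_step[OF U C fU] B by linarith
  have "Phi (U - {e2,e1}) (insert e2 C) \<le> Phi U C + Gam U C e1 - Gam U C e2 + Kap U C e2 e1"
    using Phi_step[of e2 U e1 C] U C fU by auto
  then show "Phi (U - {e1,e2}) (insert e2 C) \<le> Phi U C + B"
    using B Kap_sym[of U C e1 e2] by (simp add: insert_commute)
qed

lemma step:
  assumes fU: "finite U" and M2: "2 \<le> card U" and UC: "U \<inter> C = {}"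
  shows "\<exists>e1\<in>U. \<exists>e2\<in>U. e1 \<noteq> e2 \<and> Phi (U - {e1,e2}) (insert e1 C) \<le> Phi U C * (1 + dl (card U))
      \<and> Phi (U - {e1,e2}) (insert e2 C) \<le> Phi U C * (1 + dl (card U))"
proof -
  define M where "M = card U"
  define n where "n = card V"
  define \<Phi> where "\<Phi> = Phi U C"
  have P0: "0 \<le> \<Phi>" unfolding \<Phi>_def by (rule Phi_nonneg)
  have Gb: "0 \<le> Gam U C e \<and> Gam U C e \<le> \<Phi> / 3" if "e \<in> U" for e
    using Gam_nonneg Gam_le[OF fU that] unfolding \<Phi>_def by auto
  show ?thesis
  proof (cases "M < 2 * ss")
    case True
    obtain e1 e2 where e: "e1 \<in> U" "e2 \<in> U" "e1 \<noteq> e2"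
    proof -
      have "U \<noteq> {}" using M2 by auto
      then obtain e1 where e1: "e1 \<in> U" by blast
      have "card (U - {e1}) \<ge> 1" using M2 e1 fU by (simp add: card_Diff_singleton)
      then have "U - {e1} \<noteq> {}" by (metis card.empty not_one_le_zero)
      then obtain e2 where "e2 \<in> U - {e1}" by blast
      then show ?thesis using that e1 by auto
    qed
    have "\<bar>Gam U C e1 - Gam U C e2\<bar> + Kap U C e1 e2 \<le> \<Phi> * dl M"
    proof -
      have "\<bar>Gam U C e1 - Gam U C e2\<bar> \<le> \<Phi> / 3" using Gb[OF e(1)] Gb[OF e(2)] by linarith
      moreover have "Kap U C e1 e2 \<le> \<Phi> / 3" using Kap_le_Gam[of U C e1 e2] Gb[OF e(1)] by linarith
      ultimately show ?thesis using True P0 unfolding dl_def by simp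
    qed
    note sb = step_bound[OF fU e UC this]
    have "Phi U C + \<Phi> * dl M = Phi U C * (1 + dl (card U))" unfolding \<Phi>_def M_def by (simp add: algebra_simps)
    then show ?thesis using sb e by auto
  next
    case False
    define N where "N = M div ss"
    have Ns: "N * ss \<le> M" unfolding N_def by simp
    have MN: "M < (N + 1) * ss"
    proof -
      have "M mod ss < ss" using ss2 by simp
      moreover have "M = N * ss + M mod ss" unfolding N_def by simp
      ultimately show ?thesis by (simp add: algebra_simps)
    qed
    have N1: "1 \<le> N" unfolding N_def using False ss2 by (simp add: div_le_mono[of ss M ss, simplified] less_eq_div_iff_mult_less_eq)
    have NltM: "N < M" 
    proof -
      have "N * 2 \<le> N * ss" using ss2 by simp
      then show ?thesis using Ns N1 by linarith
    qed
    obtain e1 e2 where e: "e1 \<in> U" "e2 \<in> U" "e1 \<noteq> e2"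
      and g: "\<bar>Gam U C e1 - Gam U C e2\<bar> \<le> (\<Phi>/3) / N"
      and K: "Kap U C e1 e2 * (real M * real M - real N * real M) \<le> (real n * \<Phi>) * N"
    proof -
      have "\<exists>e1\<in>U. \<exists>e2\<in>U. e1 \<noteq> e2 \<and> \<bar>Gam U C e1 - Gam U C e2\<bar> \<le> (\<Phi>/3) / N \<and> Kap U C e1 e2 * (real M * real M - real N * real M) \<le> (real n * \<Phi>) * N"
      proof (rule pigeon[OF fU M_def[symmetric] N1 NltM])
        show "\<And>e. e \<in> U \<Longrightarrow> 0 \<le> Gam U C e \<and> Gam U C e \<le> \<Phi> / 3" by (rule Gb)
        show "\<And>e1 e2. 0 \<le> Kap U C e1 e2" by (rule Kap_nonneg)
        show "(\<Sum>e1\<in>U. \<Sum>e2\<in>U - {e1}. Kap U C e1 e2) \<le> real n * \<Phi>" unfolding n_def \<Phi>_def by (rule pair_sum[OF fU])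
      qed
      then show ?thesis using that by blast
    qed
    have rNs: "real N * real ss \<le> real M" 
    proof -
      have "real (N * ss) \<le> real M" using Ns by (simp only: of_nat_le_iff)
      then show ?thesis by simp
    qed
    have rMN: "real M \<le> 2 * real N * real ss"
    proof -
      have a: "ss \<le> N * ss" using N1 by simp
      have b: "M < N * ss + ss" using MN by (simp add: algebra_simps)
      have "M \<le> 2 * (N * ss)" using a b by linarith
      then have "M \<le> 2 * N * ss" by (simp add: mult.assoc)
      then have "real M \<le> real (2 * N * ss)" by (simp only: of_nat_le_iff)
      then show ?thesis by simp
    qed
    have Npos: "0 < real N" using N1 by simp
    have Mpos: "0 < real M" using NltM by simp
    have s1: "1 \<le> real ss - 1" using ss2 by simp
    have gb: "(\<Phi>/3) / N \<le> \<Phi> * real ss / real M"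
    proof -
      have "(\<Phi>/3) * real M \<le> (\<Phi>/3) * (2 * real N * real ss)" using rMN P0 by (intro mult_left_mono) auto
      also have "\<dots> = (2/3) * (\<Phi> * real ss * real N)" by (simp add: algebra_simps)
      also have "\<dots> \<le> \<Phi> * real ss * real N" using P0 by simp
      finally have "(\<Phi>/3) * real M \<le> \<Phi> * real ss * real N" .
      then show ?thesis using Npos Mpos by (simp add: field_simps)
    qed
    have kb: "Kap U C e1 e2 \<le> real n * \<Phi> / ((real ss - 1) * real M)"
    proof -
      have "real M * (real N * (real ss - 1)) \<le> real M * real M - real N * real M"
        using rNs Mpos by (simp add: algebra_simps mult_left_mono)
      then have "Kap U C e1 e2 * (real M * (real N * (real ss - 1))) \<le> (real n * \<Phi>) * N"
        using K Kap_nonneg[of U C e1 e2] by (meson mult_left_mono order.trans)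
      then have "Kap U C e1 e2 * (real M * (real ss - 1)) * N \<le> (real n * \<Phi>) * N" by (simp add: algebra_simps)
      then have "Kap U C e1 e2 * (real M * (real ss - 1)) \<le> real n * \<Phi>" using Npos by simp
      then show ?thesis using Mpos s1 by (simp add: field_simps)
    qed
    have "\<bar>Gam U C e1 - Gam U C e2\<bar> + Kap U C e1 e2 \<le> \<Phi> * dl M"
    proof -
      have "\<Phi> * real ss / real M + real n * \<Phi> / ((real ss - 1) * real M) = \<Phi> * dl M"
        using False s1 Mpos unfolding dl_def cc_def n_def by (simp add: field_simps)
      then show ?thesis using g gb kb by linarith
    qed
    note sb = step_bound[OF fU e UC this]
    have "Phi U C + \<Phi> * dl M = Phi U C * (1 + dl (card U))" unfolding \<Phi>_def M_def by (simp add: algebra_simps)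
    then show ?thesis using sb e by auto
  qed
qed

end


context wcg begin

definition DD :: "nat \<Rightarrow> real" where "DD m = real (min m (2 * ss)) + cc * ln (real m + 1)"

lemma cc_nonneg: "0 \<le> cc" unfolding cc_def using ss2 by auto

lemma DD_nonneg: "0 \<le> DD m" unfolding DD_def using cc_nonneg by auto

lemma dl_nonneg: "0 \<le> dl m" unfolding dl_def using cc_nonneg by auto

lemma DD_step: assumes "2 \<le> m" shows "DD (m - 2) + dl m \<le> DD m"
proof -
  have r: "real (m - 2) = real m - 2" using assms by (simp add: of_nat_diff)
  have lnm: "ln (real m - 1) \<le> ln (real m + 1)" using assms by auto
  show ?thesis
  proof (cases "m < 2 * ss")
    case True
    then have "min m (2*ss) = m" "min (m-2) (2*ss) = m - 2" by auto
    moreover have "cc * ln (real m - 1) \<le> cc * ln (real m + 1)" using lnm cc_nonneg by (rule mult_left_mono)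
    ultimately show ?thesis unfolding DD_def dl_def using True r by (simp add: algebra_simps)
  next
    case False
    have mm: "real m \<ge> 4" using False ss2 by linarith
    have a: "min (m - 2) (2*ss) \<le> min m (2*ss)" by auto
    have "ln ((real m - 1) / (real m + 1)) \<le> (real m - 1) / (real m + 1) - 1"
      using mm by (intro ln_le_minus_one) auto
    then have "ln (real m - 1) - ln (real m + 1) \<le> -2 / (real m + 1)"
      using mm by (simp add: ln_div field_simps)
    moreover have "1 / real m \<le> 2 / (real m + 1)" using mm by (simp add: field_simps)
    ultimately have "1 / real m \<le> ln (real m + 1) - ln (real m - 1)" by linarith
    then have "cc / real m \<le> cc * (ln (real m + 1) - ln (real m - 1))"
      using cc_nonneg by (metis mult_left_mono times_divide_eq_right mult.right_neutral)
    moreover have "real (min (m - 2) (2*ss)) \<le> real (min m (2*ss))" using a by (simp only: of_nat_le_iff)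
    ultimately show ?thesis unfolding DD_def dl_def using False r by (simp add: algebra_simps)
  qed
qed

lemma final:
  assumes fU: "finite U" and U1: "card U \<le> 1" and P1: "Phi U C \<le> 1" and A: "A \<in> AA"
  shows "k \<le> real (card (common_nbhd V C A \<inter> Y A))"
proof (rule ccontr)
  assume nk: "\<not> ?thesis"
  define F where "F = {y \<in> Y A. star A y \<subseteq> C}"
  define L where "L = {y \<in> Y A. star A y \<subseteq> U \<union> C}"
  have fY: "finite (Y A)" using finY[OF A] .
  have FC: "F \<subseteq> common_nbhd V C A \<inter> Y A"
    using AA_D[OF A] unfolding F_def common_nbhd_def nbhd_def star_def by (auto simp: insert_commute)
  have "card F \<le> card (common_nbhd V C A \<inter> Y A)" using FC fY by (intro card_mono) auto
  then have Fk: "real (card F) < k" using nk by linarith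
  have LF: "card L \<le> card F + 1"
  proof -
    obtain e0 where U0: "U \<subseteq> {e0}" using U1 fU
      by (metis card_0_eq card_1_singletonE empty_subsetI le_Suc_eq One_nat_def le_zero_eq order_refl)
    have "L \<subseteq> F \<union> {y \<in> Y A. e0 \<in> star A y}" unfolding L_def F_def using U0 by auto
    moreover have "card {y \<in> Y A. e0 \<in> star A y} \<le> 1"
      using uniq[OF A] by (auto simp: card_le_Suc0_iff_eq fY)
    ultimately have "card L \<le> card (F \<union> {y \<in> Y A. e0 \<in> star A y})" using fY by (intro card_mono) (auto simp: F_def)
    also have "\<dots> \<le> card F + card {y \<in> Y A. e0 \<in> star A y}" by (rule card_Un_le)
    finally show ?thesis using \<open>card {y \<in> Y A. e0 \<in> star A y} \<le> 1\<close> by linarith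
  qed
  have "(\<Prod>y\<in>Y A. (if y \<in> L then 1/2 else 1)) \<le> (\<Prod>y\<in>Y A. ff U C A y)"
  proof (rule prod_mono)
    fix y assume "y \<in> Y A"
    show "0 \<le> (if y \<in> L then 1/2 else 1::real) \<and> (if y \<in> L then 1/2 else 1) \<le> ff U C A y"
      using ff_ge[of U C A y] \<open>y \<in> Y A\<close> unfolding L_def ff_def pp_def by auto
  qed
  moreover have "(\<Prod>y\<in>Y A. (if y \<in> L then 1/2 else 1::real)) = (1/2) ^ card L"
  proof -
    have "L \<subseteq> Y A" unfolding L_def by auto
    then have "Y A \<inter> L = L" by auto
    then show ?thesis using fY by (simp add: prod.If_cases)
  qed
  moreover have "(1/2::real) ^ (card F + 1) \<le> (1/2) ^ card L" using LF by (intro power_decreasing) auto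
  ultimately have pr: "(1/2::real) ^ (card F + 1) \<le> (\<Prod>y\<in>Y A. ff U C A y)" by linarith
  have "2 powr (k+2) * (1/2::real) ^ (card F + 1) = 2 powr (k + 2 - real (card F + 1))"
  proof -
    have "(2::real) powr real (card F + 1) = 2 ^ (card F + 1)" by (rule powr_realpow) simp
    then have "(1/2::real) ^ (card F + 1) = 1 / 2 powr real (card F + 1)"
      by (simp add: power_one_over)
    moreover have "(2::real) powr (k + 2 - real (card F + 1)) = 2 powr (k+2) / 2 powr real (card F + 1)"
      by (rule powr_diff)
    ultimately show ?thesis by (metis times_divide_eq_right mult.right_neutral)
  qed
  also have "\<dots> > 2 powr 1" using Fk by (intro powr_less_mono) auto
  finally have "2 < 2 powr (k+2) * (1/2::real) ^ (card F + 1)" by simp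
  also have "\<dots> \<le> TT U C A" unfolding TT_def using pr by (intro mult_left_mono) auto
  also have "\<dots> \<le> Phi U C" unfolding Phi_def using A finAA TT_nonneg by (intro member_le_sum) auto
  finally show False using P1 by simp
qed

lemma game:
  "finite U \<Longrightarrow> U \<inter> C = {} \<Longrightarrow> Phi U C \<le> exp (- DD (card U)) \<Longrightarrow>
   waiter_wins (\<lambda>C. \<forall>A. A \<subseteq> V \<and> card A = t \<longrightarrow> real (card (common_nbhd V C A \<inter> Y A)) \<ge> k) U C"
proof (induction "card U" arbitrary: U C rule: less_induct)
  case less
  show ?case
  proof (cases "card U \<le> 1")
    case True
    have "Phi U C \<le> 1" using less.prems(3) DD_nonneg[of "card U"] by (smt (verit) exp_le_one_iff)
    then show ?thesis using final[OF less.prems(1) True] unfolding AA_def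
      by (intro waiter_wins.final less.prems(1) True) auto
  next
    case False
    obtain e1 e2 where e: "e1 \<in> U" "e2 \<in> U" "e1 \<noteq> e2"
      and b1: "Phi (U - {e1,e2}) (insert e1 C) \<le> Phi U C * (1 + dl (card U))"
      and b2: "Phi (U - {e1,e2}) (insert e2 C) \<le> Phi U C * (1 + dl (card U))"
      using step[OF less.prems(1) _ less.prems(2)] False by force
    have cU: "card (U - {e1,e2}) = card U - 2" using e less.prems(1) by (simp add: card_Diff_subset)
    have bnd: "Phi U C * (1 + dl (card U)) \<le> exp (- DD (card (U - {e1,e2})))"
    proof -
      have "Phi U C * (1 + dl (card U)) \<le> exp (- DD (card U)) * exp (dl (card U))"
        using less.prems(3) Phi_nonneg dl_nonneg by (intro mult_mono) (auto simp: add.commute)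
      also have "\<dots> = exp (- DD (card U) + dl (card U))" by (simp add: mult_exp_exp)
      also have "\<dots> \<le> exp (- DD (card U - 2))" using DD_step[of "card U"] False by simp
      finally show ?thesis using cU by simp
    qed
    have w1: "waiter_wins (\<lambda>C. \<forall>A. A \<subseteq> V \<and> card A = t \<longrightarrow> real (card (common_nbhd V C A \<inter> Y A)) \<ge> k) (U - {e1,e2}) (insert e1 C)"
      using less.hyps[of "U - {e1,e2}" "insert e1 C"] cU False less.prems b1 bnd e by auto
    have w2: "waiter_wins (\<lambda>C. \<forall>A. A \<subseteq> V \<and> card A = t \<longrightarrow> real (card (common_nbhd V C A \<inter> Y A)) \<ge> k) (U - {e1,e2}) (insert e2 C)"
      using less.hyps[of "U - {e1,e2}" "insert e2 C"] cU False less.prems b2 bnd e by auto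
    show ?thesis by (rule waiter_wins.offer[OF e w1 w2])
  qed
qed

end


context wcg begin

lemma DD_le: "m \<le> n * n \<Longrightarrow> DD m \<le> 2 * real ss + cc * ln (real n * real n + 1)"
proof -
  assume m: "m \<le> n * n"
  have "real m \<le> real n * real n" using m by (metis of_nat_le_iff of_nat_mult)
  then have "ln (real m + 1) \<le> ln (real n * real n + 1)" by simp
  then have "cc * ln (real m + 1) \<le> cc * ln (real n * real n + 1)" using cc_nonneg by (rule mult_left_mono)
  moreover have "real (min m (2 * ss)) \<le> 2 * real ss" by simp
  ultimately show ?thesis unfolding DD_def by linarith
qed

lemma TT_init:
  assumes A: "A \<in> AA" and SE: "\<And>y. y \<in> Y A \<Longrightarrow> star A y \<subseteq> E"
    and Yb: "b \<le> real (card (Y A))" and b0: "0 \<le> b"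
  shows "TT E {} A \<le> 2 powr (k+2) * exp (- ((1/2)^(t+1)) * b)"
proof -
  define q :: real where "q = (1/2)^(t+1)"
  have ff: "ff E {} A y = 1 - q" if y: "y \<in> Y A" for y
  proof -
    have "y \<notin> A" using AA_D[OF A] y by auto
    have inj: "inj_on (\<lambda>a. {y,a}) A" by (auto simp: inj_on_def doubleton_eq_iff)
    have "card (star A y \<inter> E) = card (star A y)" using SE[OF y] by (simp add: Int_absorb2)
    also have "\<dots> = card A" unfolding star_def using inj by (simp add: card_image)
    also have "\<dots> = t" using A unfolding AA_def by simp
    finally show ?thesis unfolding ff_def pp_def q_def using SE[OF y] by simp
  qed
  have "(1/2::real)^(t+1) \<le> 1" by (rule power_le_one) auto
  then have q0: "0 \<le> q" "q \<le> 1" unfolding q_def by auto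
  have "(\<Prod>y\<in>Y A. ff E {} A y) = (1 - q) ^ card (Y A)" using ff by simp
  also have "\<dots> \<le> exp (- q) ^ card (Y A)" using q0 by (intro power_mono) (auto simp: exp_ge_add_one_self[of "-q", simplified])
  also have "\<dots> = exp (- q * real (card (Y A)))" by (simp add: exp_of_nat_mult[symmetric] mult.commute)
  also have "\<dots> \<le> exp (- q * b)" using Yb q0 by (simp add: mult_left_mono)
  finally show ?thesis unfolding TT_def q_def by (intro mult_left_mono) auto
qed

lemma card_AA: "card AA \<le> card V ^ t"
proof -
  have "card AA = card V choose t" unfolding AA_def using n_subsets[OF finV] by simp
  also have "\<dots> \<le> card V ^ t"
    by (cases "t \<le> card V") (auto simp: binomial_le_pow binomial_eq_0)
  finally show ?thesis .
qed

lemma Phi_init: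
  assumes SE: "\<And>A y. A \<in> AA \<Longrightarrow> y \<in> Y A \<Longrightarrow> star A y \<subseteq> E"
    and Yb: "\<And>A. A \<in> AA \<Longrightarrow> b \<le> real (card (Y A))" and b0: "0 \<le> b"
  shows "Phi E {} \<le> real (card V ^ t) * (2 powr (k+2) * exp (- ((1/2)^(t+1)) * b))"
proof -
  have "Phi E {} \<le> (\<Sum>A\<in>AA. 2 powr (k+2) * exp (- ((1/2)^(t+1)) * b))"
    unfolding Phi_def using TT_init SE Yb b0 by (intro sum_mono) auto
  also have "\<dots> = real (card AA) * (2 powr (k+2) * exp (- ((1/2)^(t+1)) * b))" by simp
  also have "\<dots> \<le> real (card V ^ t) * (2 powr (k+2) * exp (- ((1/2)^(t+1)) * b))"
    using card_AA by (intro mult_right_mono) auto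
  finally show ?thesis .
qed

lemma ss_bounds: "real ss \<le> sqrt (real (card V)) + 3" "sqrt (real (card V)) + 1 \<le> real ss - 1"
  unfolding ss_def by (auto simp: of_nat_nat) linarith+

lemma cc_bound: "cc \<le> 2 * sqrt (real (card V)) + 3"
proof -
  define x where "x = sqrt (real (card V))"
  have x0: "0 \<le> x" unfolding x_def by simp
  have "real (card V) = x * x" unfolding x_def by simp
  have "real (card V) / (real ss - 1) \<le> real (card V) / (x + 1)"
    using ss_bounds(2) x0 unfolding x_def[symmetric] by (intro divide_left_mono) auto
  also have "\<dots> \<le> x" using x0 \<open>real (card V) = x * x\<close> by (simp add: field_simps)
  finally show ?thesis unfolding cc_def using ss_bounds(1) unfolding x_def[symmetric] by linarith
qed

end


definition fb :: "real \<Rightarrow> real" where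
  "fb x = 0.1 * (ln x)^2 / ln 2 + 8 + 2 * sqrt x + (2 * sqrt x + 3) * ln (x^2 + 1)"
lemma fb_lim: "((\<lambda>x. fb x / x powr 0.9) \<longlongrightarrow> 0) at_top"
  unfolding fb_def by real_asymp
lemma fb_ev: assumes "0 < c" shows "\<exists>N0::nat. \<forall>n\<ge>N0. fb (real n) \<le> c * real n powr 0.9 \<and> 2 \<le> n"
proof -
  have "eventually (\<lambda>x. fb x / x powr 0.9 < c) at_top" using order_tendstoD(2)[OF fb_lim assms] .
  moreover have "eventually (\<lambda>x::real. x > 0) at_top" by (rule eventually_gt_at_top)
  ultimately have "eventually (\<lambda>x. fb x \<le> c * x powr 0.9) at_top"
    by eventually_elim (auto simp: field_simps)
  then have "eventually (\<lambda>n. fb (real n) \<le> c * real n powr 0.9) sequentially"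
    by (rule eventually_compose_filterlim[OF _ filterlim_real_sequentially])
  moreover have "eventually (\<lambda>n::nat. 2 \<le> n) sequentially" by (rule eventually_ge_at_top)
  ultimately have "eventually (\<lambda>n. fb (real n) \<le> c * real n powr 0.9 \<and> 2 \<le> n) sequentially"
    by eventually_elim auto
  then show ?thesis unfolding eventually_sequentially by blast
qed

lemma exponent_bound:
  fixes \<beta> :: real and n t :: nat and s c :: real
  assumes b0: "0 < \<beta>" and n2: "2 \<le> n" and tn: "real t \<le> 0.1 * log 2 (real n)"
    and fbn: "fb (real n) \<le> (99/200 * \<beta>) * real n powr 0.9"
    and sb: "s \<le> sqrt (real n) + 3" and cb: "c \<le> 2 * sqrt (real n) + 3" and c0: "0 \<le> c"
  shows "real t * ln (real n) + (\<beta> * real n / 200^(t+1) + 2) * ln 2 - (1/2)^(t+1) * (\<beta> * real n)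
           + (2 * s + c * ln (real n * real n + 1)) \<le> 0"
proof -
  define x where "x = real n"
  have x2: "2 \<le> x" unfolding x_def using n2 by simp
  define q :: real where "q = (1/2)^(t+1)"
  define k where "k = \<beta> * x / 200^(t+1)"
  have lnx: "0 \<le> ln x" using x2 by simp
  have E1: "real t * ln x \<le> 0.1 * (ln x)^2 / ln 2"
  proof -
    have "real t * ln x \<le> (0.1 * log 2 x) * ln x" using tn lnx unfolding x_def by (intro mult_right_mono) auto
    also have "\<dots> = 0.1 * (ln x)^2 / ln 2" by (simp add: log_def power2_eq_square)
    finally show ?thesis .
  qed
  have qb: "q * (\<beta> * x) = \<beta> * x / 2^(t+1)" unfolding q_def by (simp add: power_one_over)
  have E2: "k \<le> q * (\<beta> * x) / 100"
  proof -
    have "(100::real) * 2^(t+1) \<le> 100^(t+1) * 2^(t+1)" by (intro mult_right_mono) (auto simp: one_le_power)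
    also have "\<dots> = 200^(t+1)" by (simp flip: power_mult_distrib)
    finally have "(100::real) * 2^(t+1) \<le> 200^(t+1)" .
    then have "\<beta> * x / 200^(t+1) \<le> \<beta> * x / (100 * 2^(t+1))" using b0 x2 by (intro divide_left_mono) auto
    then show ?thesis unfolding k_def qb by simp
  qed
  have k0: "0 \<le> k" unfolding k_def using b0 x2 by simp
  have E3: "(k + 2) * ln 2 \<le> k + 2" using k0 ln_2_less_1 by (intro mult_left_le) auto
  have E4: "\<beta> / 2 * x powr 0.9 \<le> q * (\<beta> * x)"
  proof -
    have "(2::real)^t = 2 powr real t" by (simp add: powr_realpow)
    also have "\<dots> \<le> 2 powr (0.1 * log 2 x)" using tn unfolding x_def by (intro powr_mono) auto
    also have "\<dots> = (2 powr log 2 x) powr 0.1" by (simp add: powr_powr mult.commute)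
    also have "\<dots> = x powr 0.1" using x2 by simp
    finally have t2: "(2::real)^t \<le> x powr 0.1" .
    have "x = x powr 0.1 * x powr 0.9" using x2 by (simp flip: powr_add)
    then have "\<beta> / 2 * x powr 0.9 = \<beta> * x / (2 * x powr 0.1)" using x2 by (simp add: field_simps)
    also have "\<dots> \<le> \<beta> * x / (2 * 2^t)" using t2 b0 x2 by (intro divide_left_mono) auto
    also have "\<dots> = q * (\<beta> * x)" unfolding qb by simp
    finally show ?thesis .
  qed
  have L0: "0 \<le> ln (x * x + 1)" using x2 by simp
  have E5: "2 * s + c * ln (x * x + 1) \<le> 2 * sqrt x + 6 + (2 * sqrt x + 3) * ln (x * x + 1)"
    using sb cb L0 unfolding x_def by (smt (verit) mult_right_mono)
  have fbx: "fb x = 0.1 * (ln x)^2 / ln 2 + 8 + 2 * sqrt x + (2 * sqrt x + 3) * ln (x * x + 1)"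
    unfolding fb_def by (simp add: power2_eq_square)
  have "real t * ln x + (k + 2) * ln 2 - q * (\<beta> * x) + (2 * s + c * ln (x * x + 1))
      \<le> fb x - 99/100 * (q * (\<beta> * x))" using E1 E2 E3 E5 fbx by linarith
  also have "\<dots> \<le> 0" using fbn E4 unfolding x_def[symmetric] by linarith
  finally show ?thesis unfolding k_def q_def x_def .
qed



theorem lemma6p2:
  fixes \<beta> :: real
  assumes "0 < \<beta>" and "\<beta> < 1"
  shows "\<exists>n0::nat. \<forall>n\<ge>n0. \<forall>t::nat. real t \<le> 0.1 * log 2 (real n) \<longrightarrow>
           (\<forall>(V::nat set) (E::nat set set) (Y::nat set \<Rightarrow> nat set).
              simple_graph V E \<and> card V = n \<and>
              (\<forall>A. A \<subseteq> V \<and> card A = t \<longrightarrow>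
                   Y A \<subseteq> common_nbhd V E A \<and> real (card (Y A)) \<ge> \<beta> * real n)
            \<longrightarrow> waiter_wins
                  (\<lambda>C. \<forall>A. A \<subseteq> V \<and> card A = t \<longrightarrow>
                     real (card (common_nbhd V C A \<inter> Y A)) \<ge> \<beta> * real n / 200 ^ (t + 1))
                  E {})"
proof -
  obtain N0 where N0: "\<And>n. n \<ge> N0 \<Longrightarrow> fb (real n) \<le> (99/200 * \<beta>) * real n powr 0.9 \<and> 2 \<le> n"
    using fb_ev[of "99/200 * \<beta>"] assms(1) by auto
  show ?thesis
  proof (intro exI[of _ N0] allI impI)
    fix n t :: nat and V :: "nat set" and E :: "nat set set" and Y :: "nat set \<Rightarrow> nat set"
    assume nN: "N0 \<le> n" and tn: "real t \<le> 0.1 * log 2 (real n)"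
      and H: "simple_graph V E \<and> card V = n \<and>
              (\<forall>A. A \<subseteq> V \<and> card A = t \<longrightarrow>
                   Y A \<subseteq> common_nbhd V E A \<and> real (card (Y A)) \<ge> \<beta> * real n)"
    have sg: "simple_graph V E" and cV: "card V = n" using H by auto
    have HY: "\<And>A. A \<subseteq> V \<Longrightarrow> card A = t \<Longrightarrow> Y A \<subseteq> common_nbhd V E A \<and> real (card (Y A)) \<ge> \<beta> * real n"
      using H by auto
    have finV: "finite V" using sg unfolding simple_graph_def by auto
    define k where "k = \<beta> * real n / 200 ^ (t + 1)"
    have YA: "\<And>A. A \<subseteq> V \<Longrightarrow> card A = t \<Longrightarrow> Y A \<subseteq> V \<and> Y A \<inter> A = {}"
      using HY unfolding common_nbhd_def by blast
    interpret w: wcg V E t Y k using finV YA by unfold_locales auto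
    have Esub: "E \<subseteq> (\<lambda>p. {fst p, snd p}) ` (V \<times> V)"
    proof
      fix e assume "e \<in> E"
      then obtain u v where "u \<in> V" "v \<in> V" "e = {u, v}" using sg unfolding simple_graph_def by blast
      then show "e \<in> (\<lambda>p. {fst p, snd p}) ` (V \<times> V)" by (intro image_eqI[of _ _ "(u,v)"]) auto
    qed
    have finE: "finite E" using Esub finV by (meson finite_SigmaI finite_imageI finite_subset)
    have cE: "card E \<le> n * n"
    proof -
      have "card E \<le> card ((\<lambda>p. {fst p, snd p}) ` (V \<times> V))" using Esub finV by (intro card_mono) auto
      also have "\<dots> \<le> card (V \<times> V)" by (rule card_image_le) (use finV in auto)
      also have "\<dots> = n * n" using cV by (simp add: card_cartesian_product)
      finally show ?thesis .
    qed
    have SE: "\<And>A y. A \<in> w.AA \<Longrightarrow> y \<in> Y A \<Longrightarrow> w.star A y \<subseteq> E"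
    proof -
      fix A y assume A: "A \<in> w.AA" and y: "y \<in> Y A"
      then have "y \<in> common_nbhd V E A" using HY unfolding w.AA_def by blast
      then show "w.star A y \<subseteq> E" unfolding common_nbhd_def nbhd_def w.star_def by auto
    qed
    have Yb: "\<And>A. A \<in> w.AA \<Longrightarrow> \<beta> * real n \<le> real (card (Y A))" using HY unfolding w.AA_def by blast
    have n2: "2 \<le> n" and fbn: "fb (real n) \<le> (99/200 * \<beta>) * real n powr 0.9" using N0[OF nN] by auto
    have P0: "w.Phi E {} \<le> real (n ^ t) * (2 powr (k+2) * exp (- ((1/2)^(t+1)) * (\<beta> * real n)))"
      using w.Phi_init[OF SE Yb] assms(1) cV by auto
    have ex: "real t * ln (real n) + (\<beta> * real n / 200^(t+1) + 2) * ln 2 - (1/2)^(t+1) * (\<beta> * real n)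
           + (2 * real w.ss + w.cc * ln (real n * real n + 1)) \<le> 0"
      using exponent_bound[OF assms(1) n2 tn fbn, of "real w.ss" w.cc] w.ss_bounds(1) w.cc_bound w.cc_nonneg cV by auto
    have npos: "0 < real n" using n2 by simp
    have "real (n ^ t) * (2 powr (k+2) * exp (- ((1/2)^(t+1)) * (\<beta> * real n)))
        = exp (real t * ln (real n) + (k + 2) * ln 2 - (1/2)^(t+1) * (\<beta> * real n))"
    proof -
      have "real (n ^ t) = exp (real t * ln (real n))" using npos
        by (simp add: exp_of_nat_mult) 
      moreover have "(2::real) powr (k+2) = exp ((k + 2) * ln 2)" by (simp add: powr_def)
      ultimately show ?thesis by (simp add: exp_add[symmetric] exp_diff[symmetric] mult_exp_exp)
    qed
    also have "\<dots> \<le> exp (- (2 * real w.ss + w.cc * ln (real n * real n + 1)))"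
      using ex unfolding k_def by simp
    also have "\<dots> \<le> exp (- w.DD (card E))" using w.DD_le[OF cE] by simp
    finally have "w.Phi E {} \<le> exp (- w.DD (card E))" using P0 by linarith
    then have "waiter_wins (\<lambda>C. \<forall>A. A \<subseteq> V \<and> card A = t \<longrightarrow> real (card (common_nbhd V C A \<inter> Y A)) \<ge> k) E {}"
      using w.game[OF finE] by simp
    then show "waiter_wins (\<lambda>C. \<forall>A. A \<subseteq> V \<and> card A = t \<longrightarrow> real (card (common_nbhd V C A \<inter> Y A)) \<ge> \<beta> * real n / 200 ^ (t + 1)) E {}"
      unfolding k_def .
  qed
qed


end
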